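(* Let $p \geq 3$ be a prime and let $B > 1$ be a real number. Write $p-1 = p_1^{e_1} p_2^{e_2} \cdots p_h^{e_h}\, Q$, where $p_1 = 2 < p_2 < \cdots < p_h$ are the distinct primes less than $B$ dividing $p-1$, $e_i \geq 1$ is the exact power of $p_i$ dividing $p-1$, and $Q$ is a positive integer having no prime factor less than $B$. Assume $Q > 1$. For each $1 \leq i \leq h$ let $\alpha_i \in (\mathbb{Z}/p\mathbb{Z})^*$ satisfy $\alpha_i^{(p-1)/p_i} \not\equiv 1 \pmod p$, and set $a \equiv \prod_{i=1}^h \alpha_i^{(p-1)/p_i^{e_i}} \pmod p$. Let $S = \{ b \in (\mathbb{Z}/p\mathbb{Z})^* : b^{(p-1)/Q} \not\equiv 1 \pmod p\}$, and for $b \in S$ let $g_b \equiv a\, b^{(p-1)/Q} \pmod p$. Then the number of $b \in S$ for which $g_b$ is a primitive root modulo $p$ (i.e. a generator of $(\mathbb{Z}/p\mathbb{Z})^*$) is at least $\frac{\varphi(Q)}{Q-1}\,|S|$. Equivalently, if $b$ is chosen uniformly at random from $S$, then $g_b$ is a primitive root modulo $p$ with probability at least $\frac{\varphi(Q)}{Q-1}$.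
   Context: $\varphi$ denotes Euler's totient function. This describes the output of the paper's "Probabilistic Primitive Root" algorithm in the case where the factorization of $p-1$ into primes below $B$ does not fully factor $p-1$: the algorithm returns $g_b = a b^{(p-1)/Q}$ for a randomly chosen $b$ with $b^{(p-1)/Q} \not\equiv 1 \pmod p$. *)

theory Defs
  imports "HOL-Number_Theory.Number_Theory"
begin

end

theory Submission
  imports Defs
begin

lemma not_coprime_prime_nat:
  fixes a b :: nat assumes "\<not> coprime a b"
  obtains r where "prime r" "r dvd a" "r dvd b"
proof -
  have "gcd a b \<noteq> 1" using assms coprime_iff_gcd_eq_1 by blast
  then obtain r where r: "prime r" "r dvd gcd a b" using prime_factor_nat by blast
  have "r dvd a" using dvd_trans[OF r(2) gcd_dvd1] .
  moreover have "r dvd b" using dvd_trans[OF r(2) gcd_dvd2] .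
  ultimately show ?thesis using that r(1) by blast
qed

lemma periodic_shift:
  fixes R :: "nat \<Rightarrow> bool" and Q :: nat
  assumes per: "\<And>k. R (k + Q) = R k"
  shows "R (m * Q + j) = R j"
proof (induction m)
  case 0 show ?case by simp
next
  case (Suc m)
  have "R (Suc m * Q + j) = R ((m * Q + j) + Q)" by (simp add: algebra_simps)
  also have "\<dots> = R (m * Q + j)" by (rule per)
  also have "\<dots> = R j" by (rule Suc.IH)
  finally show ?case .
qed

lemma card_periodic:
  fixes R :: "nat \<Rightarrow> bool" and Q :: nat
  assumes per: "\<And>k. R (k + Q) = R k"
  shows "card {k. k < m * Q \<and> R k} = m * card {k. k < Q \<and> R k}"
proof (induction m)
  case 0 then show ?case by simp
next
  case (Suc m)
  have shift: "R (m * Q + j) = R j" for j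
    using per by (rule periodic_shift)
  have eq: "{k. k < Suc m * Q \<and> R k} = {k. k < m * Q \<and> R k} \<union> (\<lambda>j. m * Q + j) ` {k. k < Q \<and> R k}"
  proof (intro Set.set_eqI iffI)
    fix k assume k: "k \<in> {k. k < Suc m * Q \<and> R k}"
    show "k \<in> {k. k < m * Q \<and> R k} \<union> (\<lambda>j. m * Q + j) ` {k. k < Q \<and> R k}"
    proof (cases "k < m * Q")
      case True
      have "k \<in> {k. k < m * Q \<and> R k}" using k True by simp
      then show ?thesis by (rule UnI1)
    next
      case False
      define j where "j = k - m * Q"
      have kj: "k = m * Q + j" "j < Q" using k False by (auto simp: j_def)
      have "R k" using k by simp
      then have "R j" using shift[of j] kj(1) by simp
      then have "j \<in> {k. k < Q \<and> R k}" using kj(2) by simp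
      then show ?thesis unfolding kj(1) by (intro UnI2 imageI)
    qed
  next
    fix k assume "k \<in> {k. k < m * Q \<and> R k} \<union> (\<lambda>j. m * Q + j) ` {k. k < Q \<and> R k}"
    then show "k \<in> {k. k < Suc m * Q \<and> R k}"
    proof (elim UnE)
      assume "k \<in> {k. k < m * Q \<and> R k}"
      then show ?thesis by simp
    next
      assume "k \<in> (\<lambda>j. m * Q + j) ` {k. k < Q \<and> R k}"
      then obtain j where j: "j < Q" "R j" "k = m * Q + j" by blast
      then show ?thesis using shift[of j] by simp
    qed
  qed
  have fin1: "finite {k. k < m * Q \<and> R k}" by simp
  have fin2: "finite ((\<lambda>j. m * Q + j) ` {k. k < Q \<and> R k})" by (rule finite_imageI) simp
  have disj: "{k. k < m * Q \<and> R k} \<inter> (\<lambda>j. m * Q + j) ` {k. k < Q \<and> R k} = {}" by auto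
  have "card {k. k < Suc m * Q \<and> R k} = card {k. k < m * Q \<and> R k} + card ((\<lambda>j. m * Q + j) ` {k. k < Q \<and> R k})"
    unfolding eq using fin1 fin2 disj by (rule card_Un_disjoint)
  also have "card ((\<lambda>j. m * Q + j) ` {k. k < Q \<and> R k}) = card {k. k < Q \<and> R k}"
    by (rule card_image) (simp add: inj_on_def)
  also have "card {k. k < m * Q \<and> R k} = m * card {k. k < Q \<and> R k}" by (rule Suc.IH)
  finally have "card {k. k < Suc m * Q \<and> R k} = m * card {k. k < Q \<and> R k} + card {k. k < Q \<and> R k}" .
  moreover have "m * card {k. k < Q \<and> R k} + card {k. k < Q \<and> R k} = Suc m * card {k. k < Q \<and> R k}" by simp
  ultimately show ?case by (rule trans)
qed

lemma card_coprime_range: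
  fixes Q m :: nat assumes "Q > 1"
  shows "card {k. k < m * Q \<and> coprime k Q} = m * totient Q"
proof -
  have c1: "card {k. k < m * Q \<and> coprime k Q} = m * card {k. k < Q \<and> coprime k Q}"
    by (rule card_periodic) (metis coprime_iff_gcd_eq_1 gcd_add1)
  have h0: "\<not> coprime 0 Q" using assms by simp
  have hQ: "\<not> coprime Q Q" using assms by simp
  have c2: "{k. k < Q \<and> coprime k Q} = totatives Q"
  proof (intro Set.set_eqI iffI)
    fix x assume "x \<in> {k. k < Q \<and> coprime k Q}"
    then have x: "x < Q" "coprime x Q" by auto
    have "x \<noteq> 0" using h0 x(2) by metis
    then show "x \<in> totatives Q" using x by (simp add: totatives_def)
  next
    fix x assume "x \<in> totatives Q"
    then have x: "x \<le> Q" "coprime x Q" by (auto simp: totatives_def)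
    have "x \<noteq> Q" using hQ x(2) by metis
    then show "x \<in> {k. k < Q \<and> coprime k Q}" using x by simp
  qed
  show ?thesis using c1 c2 by (simp add: totient_def)
qed

lemma card_ndvd_range:
  fixes Q m :: nat assumes "Q > 1"
  shows "card {k. k < m * Q \<and> \<not> Q dvd k} = m * (Q - 1)"
proof -
  have "card {k. k < m * Q \<and> \<not> Q dvd k} = m * card {k. k < Q \<and> \<not> Q dvd k}"
    by (rule card_periodic) simp
  moreover have "{k. k < Q \<and> \<not> Q dvd k} = {1..<Q}"
    using assms by (auto simp: Suc_le_eq intro: Nat.gr0I dest: dvd_imp_le)
  ultimately show ?thesis by simp
qed


lemma card_bij_filter:
  assumes "bij_betw f A B"
  shows "card {b\<in>B. R b} = card {k\<in>A. R (f k)}"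
proof -
  have "{b\<in>B. R b} = f ` {k\<in>A. R (f k)}" using assms by (auto simp: bij_betw_def)
  moreover have "inj_on f {k\<in>A. R (f k)}" using assms by (auto simp: bij_betw_def intro: inj_on_subset)
  ultimately show ?thesis by (simp add: card_image)
qed

lemma coprime_lin:
  fixes t m k Q :: nat
  assumes "coprime t m" "coprime m Q"
  shows "coprime (Q * t + k * m) (m * Q) \<longleftrightarrow> coprime k Q"
proof -
  have g0: "gcd m (k * m + Q * t) = gcd m (Q * t)" by (rule gcd_add_mult)
  have g1: "gcd (Q * t + k * m) m = gcd (Q * t) m" using g0 by (metis gcd.commute add.commute)
  have "coprime (Q * t) m" using assms by (simp add: coprime_commute)
  then have 1: "coprime (Q * t + k * m) m" using g1 by (metis coprime_iff_gcd_eq_1)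
  have g3: "gcd Q (t * Q + k * m) = gcd Q (k * m)" by (rule gcd_add_mult)
  have g2: "gcd (Q * t + k * m) Q = gcd (k * m) Q" using g3 by (metis gcd.commute mult.commute)
  have "coprime (Q * t + k * m) Q \<longleftrightarrow> coprime (k * m) Q" using g2 by (metis coprime_iff_gcd_eq_1)
  also have "\<dots> \<longleftrightarrow> coprime k Q" using assms by simp
  finally show ?thesis using 1 by simp
qed

theorem theorem1:
  fixes p Q :: nat and B :: real and \<alpha> :: "nat \<Rightarrow> nat"
  assumes "prime p" and "p \<ge> 3" and "B > 1"
    and "Q > 0" and "Q dvd p - 1"
    and "\<forall>q. prime q \<and> q dvd Q \<longrightarrow> real q \<ge> B"
    and "\<forall>q. prime q \<and> q dvd (p - 1) div Q \<longrightarrow> real q < B"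
    and "Q > 1"
    and "\<forall>q\<in>{q. prime q \<and> q dvd p - 1 \<and> real q < B}.
           \<alpha> q \<in> {1..p - 1} \<and> \<not> [\<alpha> q ^ ((p - 1) div q) = 1] (mod p)"
  shows "let P = {q. prime q \<and> q dvd p - 1 \<and> real q < B};
             a = (\<Prod>q\<in>P. \<alpha> q ^ ((p - 1) div q ^ multiplicity q (p - 1)));
             S = {b \<in> {1..p - 1}. \<not> [b ^ ((p - 1) div Q) = 1] (mod p)}
         in real (card {b \<in> S. residue_primroot p (a * b ^ ((p - 1) div Q) mod p)})
              \<ge> real (totient Q) / real (Q - 1) * real (card S)"
proof -
  define n where "n = p - 1"
  define m where "m = n div Q"
  have p1: "p > 1" using assms(1) prime_gt_1_nat by blast
  have n_pos: "n > 0" using assms(2) n_def by simp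
  have nmQ: "n = m * Q" using assms(5) by (simp add: m_def n_def)
  have m_pos: "m > 0" using nmQ n_pos by (cases m) auto
  have Qbig: "\<And>q. prime q \<Longrightarrow> q dvd Q \<Longrightarrow> real q \<ge> B" using assms(6) by blast
  have msmall: "\<And>q. prime q \<Longrightarrow> q dvd m \<Longrightarrow> real q < B" using assms(7) by (auto simp: m_def n_def)
  have cop_mQ: "coprime m Q"
  proof (rule ccontr)
    assume "\<not> coprime m Q"
    then obtain r where r: "prime r" "r dvd m" "r dvd Q" by (rule not_coprime_prime_nat)
    have "real r \<ge> B" using Qbig[OF r(1) r(3)] .
    moreover have "real r < B" using msmall[OF r(1) r(2)] .
    ultimately show False by linarith
  qed
  define P where "P = {q. prime q \<and> q dvd n \<and> real q < B}"
  define e where "e = (\<lambda>q. multiplicity q n)"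
  define E where "E = (\<lambda>q. n div q ^ e q)"
  define a where "a = (\<Prod>q\<in>P. \<alpha> q ^ E q)"
  have finP: "finite P"
  proof -
    have "P \<subseteq> {..n}" using n_pos by (auto simp: P_def dest: dvd_imp_le)
    then show ?thesis using finite_subset by blast
  qed
  have Pchar: "q \<in> P \<longleftrightarrow> prime q \<and> q dvd m" for q
  proof
    assume q: "q \<in> P"
    then have "prime q" "q dvd m * Q" "real q < B" using nmQ by (auto simp: P_def)
    moreover have "\<not> q dvd Q"
    proof
      assume "q dvd Q"
      then have "real q \<ge> B" using Qbig \<open>prime q\<close> by blast
      then show False using \<open>real q < B\<close> by linarith
    qed
    ultimately show "prime q \<and> q dvd m" by (auto simp: prime_dvd_mult_iff)
  next
    assume "prime q \<and> q dvd m"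
    then show "q \<in> P" using msmall nmQ by (auto simp: P_def)
  qed
  have alpha: "\<alpha> q \<in> {1..p-1} \<and> \<not> [\<alpha> q ^ (n div q) = 1] (mod p)" if "q \<in> P" for q
    using assms(9) that unfolding P_def n_def by blast
  have ncopQ: "coprime q Q" if "q \<in> P" for q
  proof -
    have "prime q" "real q < B" using that by (auto simp: P_def)
    have "\<not> q dvd Q"
    proof
      assume "q dvd Q"
      then have "real q \<ge> B" using Qbig \<open>prime q\<close> by blast
      then show False using \<open>real q < B\<close> by linarith
    qed
    then show ?thesis using \<open>prime q\<close> by (simp add: prime_imp_coprime)
  qed
  have EE: "E q * q ^ e q = n" for q
    by (simp add: E_def e_def multiplicity_dvd)
  have qe_dvd_m: "q ^ e q dvd m" if "q \<in> P" for q
  proof -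
    have "q ^ e q dvd m * Q" using nmQ by (metis e_def multiplicity_dvd)
    moreover have "coprime (q ^ e q) Q" using ncopQ[OF that] by simp
    ultimately show ?thesis using coprime_dvd_mult_left_iff by blast
  qed
  have cop_alpha: "coprime p (\<alpha> q)" if "q \<in> P" for q
  proof -
    have "\<alpha> q > 0" "\<alpha> q < p" using alpha[OF that] p1 by auto
    then have "\<not> p dvd \<alpha> q" by (auto dest: dvd_imp_le)
    then show ?thesis using assms(1) by (simp add: prime_imp_coprime)
  qed
  have fermat: "[\<alpha> q ^ n = 1] (mod p)" if "q \<in> P" for q
  proof -
    have "\<not> p dvd \<alpha> q" using cop_alpha[OF that] p1
      by (metis coprime_absorb_left nat_dvd_1_iff_1 less_irrefl)
    then show ?thesis using fermat_theorem[OF assms(1)] by (simp add: n_def)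
  qed
  have pow1: "[\<alpha> q ^ (E q * x) = 1] (mod p)" if q: "q \<in> P" and x: "q ^ e q dvd x" for q x
  proof -
    obtain s where s: "x = q ^ e q * s" using x by blast
    have "E q * x = n * s" using EE[of q] s by (metis mult.assoc)
    then have "\<alpha> q ^ (E q * x) = (\<alpha> q ^ n) ^ s" by (simp add: power_mult)
    also have "[\<dots> = 1 ^ s] (mod p)" by (rule cong_pow[OF fermat[OF q]])
    finally show ?thesis by simp
  qed
  have cop_a: "coprime p a" unfolding a_def
    by (rule prod_coprime_right) (use cop_alpha in auto)
  have am: "[a ^ m = 1] (mod p)"
  proof -
    have "a ^ m = (\<Prod>q\<in>P. \<alpha> q ^ (E q * m))" by (simp add: a_def prod_power_distrib power_mult)
    also have "[\<dots> = (\<Prod>q\<in>P. 1)] (mod p)"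
      by (rule cong_prod) (use pow1 qe_dvd_m in blast)
    finally show ?thesis by simp
  qed
  have anq: "\<not> [a ^ (n div q) = 1] (mod p)" if q: "q \<in> P" for q
  proof
    assume contra: "[a ^ (n div q) = 1] (mod p)"
    have primeq: "prime q" and qn: "q dvd n" using q by (auto simp: P_def)
    have "a ^ (n div q) = (\<Prod>r\<in>P. \<alpha> r ^ (E r * (n div q)))"
      by (simp add: a_def prod_power_distrib power_mult)
    also have "\<dots> = \<alpha> q ^ (E q * (n div q)) * (\<Prod>r\<in>P - {q}. \<alpha> r ^ (E r * (n div q)))"
      using finP q by (simp add: prod.remove)
    also have "[\<dots> = \<alpha> q ^ (E q * (n div q)) * (\<Prod>r\<in>P - {q}. 1)] (mod p)"
    proof (intro cong_mult cong_refl cong_prod)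
      fix r assume r: "r \<in> P - {q}"
      have pr: "prime r" "r dvd n" "r \<noteq> q" using r by (auto simp: P_def)
      have "coprime r q" using pr primeq by (simp add: primes_coprime)
      then have c: "coprime (r ^ e r) q" by simp
      have "r ^ e r dvd q * (n div q)" using qn by (metis e_def multiplicity_dvd dvd_mult_div_cancel)
      then have "r ^ e r dvd n div q" using c coprime_dvd_mult_right_iff by blast
      then show "[\<alpha> r ^ (E r * (n div q)) = 1] (mod p)" using pow1 r by blast
    qed
    finally have "[a ^ (n div q) = \<alpha> q ^ (E q * (n div q))] (mod p)" by simp
    then have c1: "[\<alpha> q ^ (E q * (n div q)) = 1] (mod p)" using contra
      by (meson cong_sym cong_trans)
    define \<beta> where "\<beta> = \<alpha> q ^ (n div q)"
    have "\<beta> ^ E q = \<alpha> q ^ ((n div q) * E q)" by (simp add: \<beta>_def power_mult)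
    also have "(n div q) * E q = E q * (n div q)" by (rule mult.commute)
    finally have "[\<beta> ^ E q = 1] (mod p)" using c1 by simp
    hence d1: "ord p \<beta> dvd E q" by (simp add: ord_divides ord_divides')
    have "\<beta> ^ q = \<alpha> q ^ n" using qn by (simp add: \<beta>_def power_mult[symmetric])
    hence "[\<beta> ^ q = 1] (mod p)" using fermat[OF q] by simp
    hence "ord p \<beta> dvd q" by (simp add: ord_divides ord_divides')
    moreover have "ord p \<beta> \<noteq> 1" using alpha[OF q] ord_eq_Suc_0_iff[of p \<beta>] by (simp add: \<beta>_def)
    ultimately have "ord p \<beta> = q" using primeq using prime_nat_iff by blast
    with d1 have "q dvd E q" by simp
    moreover have "q \<noteq> Suc 0" using primeq by auto
    then have "\<not> q dvd n div q ^ multiplicity q n" using multiplicity_decompose[of n q] n_pos by simp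
    ultimately show False by (simp add: E_def e_def)
  qed
  obtain g where g: "residue_primroot p g" using prime_primitive_root_exists[OF p1 assms(1)] by blast
  have totp: "totient p = n" using assms(1) by (simp add: totient_prime n_def)
  have ordg: "ord p g = n" and copg: "coprime p g" using g totp by (auto simp: residue_primroot_def)
  define f where "f = (\<lambda>i. g ^ i mod p)"
  have gen: "bij_betw f {..<n} {1..p-1}"
  proof -
    have "bij_betw f {..<totient p} (totatives p)"
      unfolding f_def by (rule residue_primroot_is_generator[OF p1 g])
    moreover have "totatives p = {1..p-1}" using assms(1) by (auto simp: totatives_prime)
    ultimately show ?thesis using totp by simp
  qed
  have powcong: "[g ^ j = 1] (mod p) \<longleftrightarrow> n dvd j" for j
    by (simp add: ord_divides ord_divides' ordg)
  have prim_pow: "residue_primroot p (g ^ j) \<longleftrightarrow> coprime j n" for j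
  proof -
    have "ord p (g ^ j) = n div gcd j n" using copg ordg by (simp add: ord_power)
    moreover have "n div gcd j n = n \<longleftrightarrow> gcd j n = 1"
    proof
      assume h: "n div gcd j n = n"
      have "gcd j n dvd n" by simp
      then have "n = gcd j n * (n div gcd j n)" by simp
      then have "n = gcd j n * n" using h by simp
      then show "gcd j n = 1" using n_pos by simp
    qed simp
    ultimately have "ord p (g ^ j) = n \<longleftrightarrow> coprime j n" by (metis coprime_iff_gcd_eq_1)
    moreover have "coprime p (g ^ j)" using copg by simp
    ultimately show ?thesis using p1 totp by (auto simp: residue_primroot_def)
  qed
  have "a mod p \<in> {1..p-1}"
  proof -
    have "\<not> p dvd a" using cop_a p1
      by (metis coprime_absorb_left nat_dvd_1_iff_1 less_irrefl)
    then have "a mod p \<noteq> 0" by (simp add: dvd_eq_mod_eq_0)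
    moreover have "a mod p < p" using p1 by simp
    ultimately show ?thesis by auto
  qed
  then have "a mod p \<in> f ` {..<n}" using gen by (simp add: bij_betw_def)
  then obtain t where t: "t < n" "f t = a mod p" by (auto simp: image_iff)
  have at: "[a = g ^ t] (mod p)" using t by (simp add: f_def cong_def)
  have "Q dvd t"
  proof -
    have "[g ^ (t * m) = a ^ m] (mod p)" using cong_pow[OF at, of m]
      by (simp add: power_mult cong_sym)
    then have "[g ^ (t * m) = 1] (mod p)" using am by (rule cong_trans)
    then have "m * Q dvd t * m" using powcong nmQ by simp
    then show ?thesis using m_pos by (simp add: mult.commute)
  qed
  then obtain t' where t': "t = Q * t'" by blast
  have cop_t': "coprime t' m"
  proof (rule ccontr)
    assume "\<not> coprime t' m"
    then obtain r where r: "prime r" "r dvd t'" "r dvd m" by (rule not_coprime_prime_nat)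
    then have rP: "r \<in> P" using Pchar by simp
    obtain s where s: "t' = r * s" using r by blast
    have rn: "r dvd n" using r nmQ by simp
    have "t * (n div r) = n * (Q * s)" using t' s rn by (simp add: algebra_simps)
    then have "[g ^ (t * (n div r)) = 1] (mod p)" using powcong by simp
    moreover have "[a ^ (n div r) = g ^ (t * (n div r))] (mod p)"
      using cong_pow[OF at, of "n div r"] by (simp add: power_mult)
    ultimately have "[a ^ (n div r) = 1] (mod p)" by (rule cong_trans[rotated])
    then show False using anq[OF rP] by simp
  qed
  have fk_cong: "[f k ^ m = g ^ (k * m)] (mod p)" for k
    by (simp add: f_def power_mult cong_def power_mod)
  have condS: "[f k ^ m = 1] (mod p) \<longleftrightarrow> Q dvd k" for k
  proof -
    have "[f k ^ m = 1] (mod p) \<longleftrightarrow> [g ^ (k * m) = 1] (mod p)"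
      using fk_cong by (meson cong_sym cong_trans)
    also have "\<dots> \<longleftrightarrow> m * Q dvd k * m" using powcong nmQ by simp
    also have "\<dots> \<longleftrightarrow> Q dvd k" using m_pos by (simp add: mult.commute)
    finally show ?thesis .
  qed
  have condT: "residue_primroot p (a * f k ^ m mod p) \<longleftrightarrow> coprime k Q" for k
  proof -
    have "[a * f k ^ m = g ^ t * g ^ (k * m)] (mod p)" using at fk_cong by (rule cong_mult)
    then have "residue_primroot p (a * f k ^ m mod p) \<longleftrightarrow> residue_primroot p (g ^ (t + k * m))"
      by (simp add: residue_primroot_cong power_add)
    also have "\<dots> \<longleftrightarrow> coprime (Q * t' + k * m) (m * Q)" using prim_pow t' nmQ by simp
    also have "\<dots> \<longleftrightarrow> coprime k Q" using coprime_lin[OF cop_t' cop_mQ] .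
    finally show ?thesis .
  qed
  define S where "S = {b \<in> {1..p - 1}. \<not> [b ^ m = 1] (mod p)}"
  have cardS: "card S = m * (Q - 1)"
  proof -
    have "card S = card {k \<in> {..<n}. \<not> [f k ^ m = 1] (mod p)}"
      unfolding S_def by (rule card_bij_filter[OF gen])
    also have "{k \<in> {..<n}. \<not> [f k ^ m = 1] (mod p)} = {k. k < m * Q \<and> \<not> Q dvd k}"
      using condS nmQ by auto
    finally show ?thesis using card_ndvd_range[OF assms(8)] by simp
  qed
  have cardT: "card {b \<in> S. residue_primroot p (a * b ^ m mod p)} = m * totient Q"
  proof -
    have "{b \<in> S. residue_primroot p (a * b ^ m mod p)}
          = {b \<in> {1..p-1}. \<not> [b ^ m = 1] (mod p) \<and> residue_primroot p (a * b ^ m mod p)}"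
      by (auto simp: S_def)
    then have "card {b \<in> S. residue_primroot p (a * b ^ m mod p)}
        = card {k \<in> {..<n}. \<not> [f k ^ m = 1] (mod p) \<and> residue_primroot p (a * f k ^ m mod p)}"
      using card_bij_filter[OF gen] by simp
    also have "{k \<in> {..<n}. \<not> [f k ^ m = 1] (mod p) \<and> residue_primroot p (a * f k ^ m mod p)}
         = {k. k < m * Q \<and> coprime k Q}"
    proof -
      have "coprime k Q \<Longrightarrow> \<not> Q dvd k" for k using assms(8)
        by (metis coprime_absorb_right less_irrefl nat_dvd_1_iff_1 coprime_commute dvd_refl
                  coprime_common_divisor_nat)
      then show ?thesis using condS condT nmQ by auto
    qed
    finally show ?thesis using card_coprime_range[OF assms(8)] by simp
  qed
  have mdef: "(p - 1) div Q = m" by (simp add: m_def n_def)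
  have adef: "(\<Prod>q\<in>{q. prime q \<and> q dvd p - 1 \<and> real q < B}. \<alpha> q ^ ((p - 1) div q ^ multiplicity q (p - 1))) = a"
    by (simp add: a_def P_def E_def e_def n_def)
  have final: "real (card {b \<in> S. residue_primroot p (a * b ^ m mod p)})
              \<ge> real (totient Q) / real (Q - 1) * real (card S)"
    unfolding cardS cardT using assms(8) m_pos by (simp add: field_simps)
  show ?thesis unfolding Let_def mdef adef using final by (simp add: S_def)
qed

end
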